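(* Let $X$ be a finite-dimensional real Hilbert space and let $\mathcal{C}$ be a nonempty finite collection of nonempty polyhedral subsets of $X$. Let $\lambda\in[0,2[$ and $x_0\in X$. Generate a sequence $(x_n)_{n\in\mathbb{N}}$ as follows: given $x_n$, pick any $R_n\in\mathcal{R}_{\mathcal{C},[0,\lambda]}$ (the choice may depend arbitrarily on $n$ and on the past) and set $x_{n+1}:=R_n x_n$. Then the sequence $(x_n)_{n\in\mathbb{N}}$ is bounded.
   Context: A subset of $X$ is polyhedral if it is the intersection of finitely many closed halfspaces. For a nonempty closed convex set $C$, $P_C$ is the orthogonal (nearest-point) projector onto $C$, and $\mathrm{Id}$ is the identity on $X$. For a finite collection $\mathcal{C}$ of nonempty closed convex sets and an interval $\Lambda\subseteq[0,2]$, the set of relaxed projectors is \[ \mathcal{R}_{\mathcal{C},\Lambda}:=\{(1-\mu)\mathrm{Id}+\mu P_C : C\in\mathcal{C},\ \mu\in\Lambda\}. \] *)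

theory Defs
  imports "HOL-Analysis.Analysis"
begin

definition relaxed_projectors ::
  "'a::euclidean_space set set \<Rightarrow> real set \<Rightarrow> ('a \<Rightarrow> 'a) set" where
  "relaxed_projectors \<C> \<Lambda> =
     {(\<lambda>x. (1 - \<mu>) *\<^sub>R x + \<mu> *\<^sub>R closest_point C x) | C \<mu>. C \<in> \<C> \<and> \<mu> \<in> \<Lambda>}"

end

theory Submission
  imports Defs
begin

definition good :: "'a::euclidean_space set \<Rightarrow> bool" where
  "good A \<longleftrightarrow> affine A \<and> A \<noteq> {}"

definition stp :: "'a::euclidean_space set \<Rightarrow> real \<Rightarrow> 'a \<Rightarrow> 'a" where
  "stp A m x = x - m *\<^sub>R (x - closest_point A x)"

definition dir :: "'a::euclidean_space set \<Rightarrow> 'a set" where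
  "dir A = {y - z | y z. y \<in> A \<and> z \<in> A}"

definition Wd :: "'a::euclidean_space set set \<Rightarrow> 'a set" where
  "Wd F = \<Inter> (dir ` F)"

definition nu :: "'a::euclidean_space set set \<Rightarrow> 'a \<Rightarrow> real" where
  "nu F x = norm (x - closest_point (Wd F) x)"

definition traj :: "'a::euclidean_space set set \<Rightarrow> real \<Rightarrow> (nat \<Rightarrow> 'a) \<Rightarrow> bool" where
  "traj F lam x \<longleftrightarrow> (\<forall>i. \<exists>A\<in>F. \<exists>m. 0 \<le> m \<and> m \<le> lam \<and> x (Suc i) = stp A m (x i))"

lemma good_closed: "good A \<Longrightarrow> closed A"
  by (simp add: good_def affine_closed)

lemma good_convex: "good A \<Longrightarrow> convex A"
  by (simp add: good_def affine_imp_convex)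

lemma cp_in: "good A \<Longrightarrow> closest_point A x \<in> A"
  by (simp add: closest_point_in_set good_closed good_def)

lemma cp_orth:
  assumes "good A" "y \<in> A"
  shows "(y - closest_point A x) \<bullet> (x - closest_point A x) = 0"
proof -
  let ?p = "closest_point A x"
  have p: "?p \<in> A" using cp_in assms by blast
  have 1: "(x - ?p) \<bullet> (y - ?p) \<le> 0"
    using closest_point_dot[OF good_convex[OF assms(1)] good_closed[OF assms(1)] assms(2)] .
  have "?p + (-1) *\<^sub>R (y - ?p) \<in> A"
    using mem_affine_3_minus[of A ?p y ?p "-1"] assms p by (auto simp: good_def)
  then have "(x - ?p) \<bullet> ((?p + (-1) *\<^sub>R (y - ?p)) - ?p) \<le> 0"
    using closest_point_dot[OF good_convex[OF assms(1)] good_closed[OF assms(1)]] by blast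
  then have 2: "(x - ?p) \<bullet> (y - ?p) \<ge> 0" by (simp add: inner_diff_right)
  from 1 2 show ?thesis by (simp add: inner_commute)
qed

lemma dir_orth:
  assumes "good A" "d \<in> dir A"
  shows "d \<bullet> (x - closest_point A x) = 0"
proof -
  obtain y z where d: "d = y - z" "y \<in> A" "z \<in> A" using assms(2) unfolding dir_def by blast
  have "(y - closest_point A x) \<bullet> (x - closest_point A x) = 0"
       "(z - closest_point A x) \<bullet> (x - closest_point A x) = 0"
    using cp_orth assms(1) d by blast+
  moreover have "d = (y - closest_point A x) - (z - closest_point A x)" using d(1) by simp
  ultimately show ?thesis by (simp add: inner_diff_left)
qed

lemma dir_eq: assumes "affine A" "a \<in> A" shows "dir A = (\<lambda>x. x - a) ` A"
proof
  show "dir A \<subseteq> (\<lambda>x. x - a) ` A"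
  proof
    fix d assume "d \<in> dir A"
    then obtain y z where d: "d = y - z" "y \<in> A" "z \<in> A" unfolding dir_def by blast
    have "a + 1 *\<^sub>R (y - z) \<in> A" using mem_affine_3_minus[OF assms(1) assms(2) d(2) d(3)] .
    moreover have "d = (a + 1 *\<^sub>R (y - z)) - a" using d by simp
    ultimately show "d \<in> (\<lambda>x. x - a) ` A" by blast
  qed
next
  show "(\<lambda>x. x - a) ` A \<subseteq> dir A" using assms unfolding dir_def by blast
qed

lemma dir_subspace: "good A \<Longrightarrow> subspace (dir A)"
  unfolding good_def using dir_eq affine_diffs_subspace_subtract by fastforce

lemma Wd_subspace: "(\<forall>A\<in>F. good A) \<Longrightarrow> subspace (Wd F)"
  unfolding Wd_def by (auto intro!: subspace_Inter dir_subspace)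

lemma subspace_good: "subspace W \<Longrightarrow> good W"
  unfolding good_def using subspace_imp_affine subspace_0 by blast

lemma sp_in: "subspace (W::'a::euclidean_space set) \<Longrightarrow> closest_point W x \<in> W"
  using cp_in subspace_good by blast

lemma sp_orth:
  fixes W :: "'a::euclidean_space set"
  assumes "subspace W" "w \<in> W"
  shows "(x - closest_point W x) \<bullet> w = 0"
proof -
  have "closest_point W x + w \<in> W" using assms sp_in subspace_add by blast
  from cp_orth[OF subspace_good[OF assms(1)] this, of x] show ?thesis
    by (simp add: inner_commute)
qed

lemma sp_char:
  fixes W :: "'a::euclidean_space set"
  assumes "subspace W" "p \<in> W" "\<And>w. w \<in> W \<Longrightarrow> (x - p) \<bullet> w = 0"
  shows "closest_point W x = p"
proof -
  have "\<forall>z\<in>W. dist x p \<le> dist x z"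
  proof
    fix z assume z: "z \<in> W"
    have "p - z \<in> W" using assms(1,2) z subspace_diff by blast
    then have o: "(x - p) \<bullet> (p - z) = 0" using assms(3) by blast
    have "x - z = (x - p) + (p - z)" by simp
    then have "(norm (x - z))^2 = (norm (x - p))^2 + (norm (p - z))^2"
      using norm_add_Pythagorean[of "x - p" "p - z"] o by (simp add: orthogonal_def)
    then have "(norm (x - p))^2 \<le> (norm (x - z))^2" by simp
    from power2_le_imp_le[OF this] show "dist x p \<le> dist x z" by (simp add: dist_norm)
  qed
  moreover have "convex W" "closed W" using good_convex good_closed subspace_good assms(1) by blast+
  ultimately show ?thesis
    using closest_point_unique[of W p x] assms(2) by simp
qed

lemma sp_add_orth:
  fixes W :: "'a::euclidean_space set"
  assumes "subspace W" "\<And>w. w \<in> W \<Longrightarrow> v \<bullet> w = 0"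
  shows "closest_point W (x + v) = closest_point W x"
proof (rule sp_char[OF assms(1) sp_in[OF assms(1)]])
  fix w assume w: "w \<in> W"
  have "(x + v - closest_point W x) \<bullet> w = (x - closest_point W x) \<bullet> w + v \<bullet> w"
    by (simp add: algebra_simps inner_add_left inner_diff_left)
  also have "\<dots> = 0" using sp_orth[OF assms(1) w] assms(2)[OF w] by simp
  finally show "(x + v - closest_point W x) \<bullet> w = 0" .
qed

lemma sp_add_in:
  fixes W :: "'a::euclidean_space set"
  assumes "subspace W" "w \<in> W"
  shows "closest_point W (x + w) = closest_point W x + w"
proof (rule sp_char[OF assms(1)])
  show "closest_point W x + w \<in> W" using sp_in[OF assms(1)] assms subspace_add by blast
  fix u assume u: "u \<in> W"
  have "(x + w - (closest_point W x + w)) = x - closest_point W x" by simp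
  then show "(x + w - (closest_point W x + w)) \<bullet> u = 0" using sp_orth[OF assms(1) u] by simp
qed

lemma sp_scale:
  fixes W :: "'a::euclidean_space set"
  assumes "subspace W"
  shows "closest_point W (c *\<^sub>R x) = c *\<^sub>R closest_point W x"
proof (rule sp_char[OF assms(1)])
  show "c *\<^sub>R closest_point W x \<in> W" using sp_in[OF assms(1)] assms subspace_scale by blast
  fix u assume u: "u \<in> W"
  have "(c *\<^sub>R x - c *\<^sub>R closest_point W x) = c *\<^sub>R (x - closest_point W x)"
    by (simp add: scaleR_right_diff_distrib)
  then show "(c *\<^sub>R x - c *\<^sub>R closest_point W x) \<bullet> u = 0" using sp_orth[OF assms(1) u] by simp
qed

lemma sp_diff:
  fixes W :: "'a::euclidean_space set"
  assumes "subspace W"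
  shows "closest_point W (x - y) = closest_point W x - closest_point W y"
proof (rule sp_char[OF assms(1)])
  show "closest_point W x - closest_point W y \<in> W" using sp_in[OF assms(1)] assms subspace_diff by blast
  fix u assume u: "u \<in> W"
  have "(x - y - (closest_point W x - closest_point W y)) = (x - closest_point W x) - (y - closest_point W y)"
    by simp
  then show "(x - y - (closest_point W x - closest_point W y)) \<bullet> u = 0"
    using sp_orth[OF assms(1) u, of x] sp_orth[OF assms(1) u, of y] by (simp add: inner_diff_left)
qed

lemma sp_pyth:
  fixes W :: "'a::euclidean_space set"
  assumes "subspace W"
  shows "(norm x)^2 = (norm (closest_point W x))^2 + (norm (x - closest_point W x))^2"
proof -
  have "(closest_point W x) \<bullet> (x - closest_point W x) = 0"
    using sp_orth[OF assms sp_in[OF assms]] by (simp add: inner_commute)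
  then show ?thesis using norm_add_Pythagorean[of "closest_point W x" "x - closest_point W x"]
    by (simp add: orthogonal_def)
qed

lemma sp_resid_le:
  fixes W :: "'a::euclidean_space set"
  assumes "subspace W"
  shows "norm ((x - closest_point W x) - (y - closest_point W y)) \<le> norm (x - y)"
proof -
  have e: "(x - closest_point W x) - (y - closest_point W y) = (x - y) - closest_point W (x - y)"
    using sp_diff[OF assms] by simp
  have "(norm (x - y))^2 = (norm (closest_point W (x-y)))^2 + (norm ((x - y) - closest_point W (x-y)))^2"
    using sp_pyth[OF assms] by blast
  then have "(norm ((x - y) - closest_point W (x-y)))^2 \<le> (norm (x - y))^2" by simp
  then have "norm ((x - y) - closest_point W (x - y)) \<le> norm (x - y)"
    by (rule power2_le_imp_le) simp
  then show ?thesis by (subst e)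
qed


lemma stp_nonexp:
  assumes "good A" "0 \<le> m" "m \<le> 2"
  shows "norm (stp A m x - stp A m y) \<le> norm (x - y)"
proof -
  define p where "p = closest_point A x"
  define q where "q = closest_point A y"
  define a where "a = p - q"
  define b where "b = (x - p) - (y - q)"
  have pA: "p \<in> A" and qA: "q \<in> A" using cp_in assms(1) p_def q_def by blast+
  have o1: "(q - p) \<bullet> (x - p) = 0" using cp_orth[OF assms(1) qA, of x] p_def by simp
  have o2: "(p - q) \<bullet> (y - q) = 0" using cp_orth[OF assms(1) pA, of y] q_def by simp
  have ab: "a \<bullet> b = 0"
  proof -
    have "a \<bullet> b = (p - q) \<bullet> (x - p) - (p - q) \<bullet> (y - q)" by (simp add: a_def b_def inner_diff_right)
    also have "(p - q) \<bullet> (x - p) = - ((q - p) \<bullet> (x - p))" by (simp add: inner_diff_left)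
    finally show ?thesis using o1 o2 by simp
  qed
  have e1: "x - y = a + b" by (simp add: a_def b_def)
  have e2: "stp A m x - stp A m y = a + (1 - m) *\<^sub>R b"
    by (simp add: stp_def a_def b_def p_def[symmetric] q_def[symmetric] algebra_simps)
  have n1: "(norm (x - y))^2 = (norm a)^2 + (norm b)^2"
    using e1 norm_add_Pythagorean[of a b] ab by (simp add: orthogonal_def)
  have "a \<bullet> ((1 - m) *\<^sub>R b) = 0" using ab by simp
  then have n2: "(norm (stp A m x - stp A m y))^2 = (norm a)^2 + ((1 - m)^2) * (norm b)^2"
    using e2 norm_add_Pythagorean[of a "(1 - m) *\<^sub>R b"] by (simp add: orthogonal_def power_mult_distrib)
  have "m * (m - 2) \<le> 0" using assms(2,3) by (intro mult_nonneg_nonpos) auto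
  then have "(1 - m)^2 \<le> 1" by (simp add: power2_eq_square algebra_simps)
  then have "((1 - m)^2) * (norm b)^2 \<le> (norm b)^2"
    by (simp add: mult_left_le_one_le)
  then have "(norm (stp A m x - stp A m y))^2 \<le> (norm (x - y))^2" using n1 n2 by simp
  from power2_le_imp_le[OF this] show ?thesis by simp
qed

lemma stp_norm:
  assumes "good A"
  shows "(norm (stp A m x))^2 = (norm x)^2 - m * (2 - m) * (norm (x - closest_point A x))^2
           - 2 * m * (closest_point A 0 \<bullet> (x - closest_point A x))"
proof -
  define p where "p = closest_point A x"
  define d where "d = x - p"
  define q where "q = closest_point A 0"
  have qA: "q \<in> A" using cp_in assms q_def by blast
  have o: "(q - p) \<bullet> d = 0" using cp_orth[OF assms qA, of x] p_def d_def by simp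
  have xd: "x \<bullet> d = d \<bullet> d + q \<bullet> d"
  proof -
    have "x = d + p" by (simp add: d_def)
    then have "x \<bullet> d = d \<bullet> d + p \<bullet> d" by (simp add: inner_add_left)
    moreover have "p \<bullet> d = q \<bullet> d" using o by (simp add: inner_diff_left)
    ultimately show ?thesis by simp
  qed
  have st: "stp A m x = x - m *\<^sub>R d" by (simp add: stp_def p_def d_def)
  have "(norm (x - m *\<^sub>R d))^2 = x \<bullet> x - 2 * m * (x \<bullet> d) + m * m * (d \<bullet> d)"
    by (simp add: power2_norm_eq_inner inner_diff_left inner_diff_right inner_commute algebra_simps)
  then have "(norm (stp A m x))^2 = x \<bullet> x - 2 * m * (x \<bullet> d) + m * m * (d \<bullet> d)"
    by (simp only: st)
  also have "\<dots> = (norm x)^2 - m * (2 - m) * (norm d)^2 - 2 * m * (q \<bullet> d)"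
    using xd by (simp add: power2_norm_eq_inner algebra_simps)
  finally show ?thesis by (simp add: p_def d_def q_def)
qed

lemma stp_W:
  assumes "good A" "subspace W" "W \<subseteq> dir A"
  shows "closest_point W (stp A m x) = closest_point W x"
proof -
  have e: "stp A m x = x + (- m *\<^sub>R (x - closest_point A x))" by (simp add: stp_def)
  have "\<And>w. w \<in> W \<Longrightarrow> (- m *\<^sub>R (x - closest_point A x)) \<bullet> w = 0"
    using dir_orth[OF assms(1)] assms(3) by (auto simp: inner_commute)
  then have "closest_point W (x + (- m *\<^sub>R (x - closest_point A x))) = closest_point W x"
    by (rule sp_add_orth[OF assms(2)])
  then show ?thesis by (simp only: e)
qed

lemma stp_move: "norm (stp A m x - x) = \<bar>m\<bar> * norm (x - closest_point A x)"
  by (simp add: stp_def)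

lemma stp_zero: "stp A 0 x = x" by (simp add: stp_def)

lemma dist_cp_lip:
  assumes "good A"
  shows "norm (x - closest_point A x) \<le> norm (x - y) + norm (y - closest_point A y)"
proof -
  have "dist x (closest_point A x) \<le> dist x (closest_point A y)"
    using closest_point_le[OF good_closed[OF assms] cp_in[OF assms]] .
  also have "\<dots> \<le> dist x y + dist y (closest_point A y)" by (rule dist_triangle)
  finally show ?thesis by (simp add: dist_norm)
qed

lemma cs_bound:
  assumes "norm q \<le> r"
  shows "- (q \<bullet> d) \<le> r * norm d"
proof -
  have "\<bar>q \<bullet> d\<bar> \<le> norm q * norm d" by (rule Cauchy_Schwarz_ineq2)
  also have "\<dots> \<le> r * norm d" using assms by (simp add: mult_right_mono)
  finally show ?thesis by linarith
qed

lemma stp_basic: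
  assumes "good A" "0 \<le> m" "norm (closest_point A 0) \<le> r"
  shows "(norm (stp A m x))^2 \<le> (norm x)^2 - m * (2 - m) * (norm (x - closest_point A x))^2
           + 2 * m * (r * norm (x - closest_point A x))"
proof -
  have a: "- (closest_point A 0 \<bullet> (x - closest_point A x)) \<le> r * norm (x - closest_point A x)"
    using cs_bound[OF assms(3)] .
  have "- (2 * m * (closest_point A 0 \<bullet> (x - closest_point A x))) \<le> 2 * m * (r * norm (x - closest_point A x))"
    using mult_left_mono[OF a, of "2 * m"] assms(2) by simp
  then show ?thesis using stp_norm[OF assms(1), of m x] by linarith
qed

lemma amgm_aux:
  fixes m k r D :: real
  assumes "0 \<le> m" "m \<le> 2" "k > 0" "k \<le> 2 - m" "r \<ge> 0" "D \<ge> 0"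
  shows "2 * m * (r * D) - m * (2 - m) * D^2 \<le> 2 * r^2 / k"
proof -
  define s where "s = r / k"
  have rs: "r = k * s" using assms(3) by (simp add: s_def)
  have s0: "s \<ge> 0" using assms(3,5) by (simp add: s_def)
  have "0 \<le> m * k * (D - s)^2" using assms by simp
  also have "m * k * (D - s)^2 = m * k * D^2 - 2 * m * (r * D) + m * r * s"
    by (simp add: rs power2_eq_square algebra_simps)
  finally have 1: "2 * m * (r * D) - m * k * D^2 \<le> m * r * s" by linarith
  have "m * k * D^2 \<le> m * (2 - m) * D^2"
    using assms by (intro mult_right_mono mult_left_mono) auto
  moreover have "m * r * s \<le> 2 * r * s" using assms(1,2,5) s0
    by (intro mult_right_mono) auto
  moreover have "2 * r * s = 2 * r^2 / k" by (simp add: s_def power2_eq_square)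
  ultimately show ?thesis using 1 by linarith
qed

lemma stp_incr:
  assumes "good A" "0 \<le> m" "m \<le> lam" "lam < 2" "norm (closest_point A 0) \<le> r"
  shows "(norm (stp A m x))^2 \<le> (norm x)^2 + 2 * r^2 / (2 - lam)"
proof -
  have r0: "r \<ge> 0" using assms(5) norm_ge_zero order_trans by blast
  have "2 * m * (r * norm (x - closest_point A x)) - m * (2 - m) * (norm (x - closest_point A x))^2
        \<le> 2 * r^2 / (2 - lam)"
    using assms r0 by (intro amgm_aux) auto
  then show ?thesis using stp_basic[OF assms(1,2,5), of x] by linarith
qed

lemma stp_far:
  assumes "good A" "0 \<le> m" "m \<le> lam" "lam < 2" "norm (closest_point A 0) \<le> r"
    and "norm (x - closest_point A x) \<ge> R" "(2 - lam) * R / 2 \<ge> 2 * r"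
  shows "(norm (stp A m x))^2 \<le> (norm x)^2 - norm (stp A m x - x) * ((2 - lam) * R / 2)"
proof -
  define D where "D = norm (x - closest_point A x)"
  define q where "q = closest_point A 0"
  have 1: "(norm (stp A m x))^2 \<le> (norm x)^2 - m * (2 - m) * D^2 + 2 * m * (r * D)"
    using stp_basic[OF assms(1,2,5), of x] D_def by simp
  have mv: "norm (stp A m x - x) = m * D" unfolding D_def stp_move[of A m x] using assms(2) by simp
  have D0: "D \<ge> 0" by (simp add: D_def)
  have "(2 - m) * D - 2 * r \<ge> (2 - lam) * R / 2"
  proof -
    have "(2 - m) * D \<ge> (2 - lam) * D" using assms(3) D0 by (simp add: mult_right_mono)
    moreover have "(2 - lam) * D \<ge> (2 - lam) * R" using assms(4,6) D_def by simp
    ultimately show ?thesis using assms(7) by linarith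
  qed
  then have "m * D * ((2 - lam) * R / 2) \<le> m * D * ((2 - m) * D - 2 * r)"
    by (rule mult_left_mono) (use assms(2) D0 in simp)
  moreover have "m * D * ((2 - m) * D - 2 * r) = m * (2 - m) * D^2 - 2 * m * (r * D)"
    by (simp add: power2_eq_square algebra_simps)
  ultimately show ?thesis unfolding mv using 1 by linarith
qed


lemma Wd_sub_dir: "A \<in> F \<Longrightarrow> Wd F \<subseteq> dir A"
  unfolding Wd_def by blast

lemma dir_good: "good A \<Longrightarrow> good (dir A)"
  using dir_subspace subspace_good by blast

lemma g_bound:
  assumes "good A" "a \<in> A"
  shows "norm (u - closest_point (dir A) u) \<le> norm (u - closest_point A u) + norm a"
proof -
  have "closest_point A u - a \<in> dir A" using cp_in[OF assms(1)] assms(2) unfolding dir_def by blast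
  then have "dist u (closest_point (dir A) u) \<le> dist u (closest_point A u - a)"
    using closest_point_le good_closed dir_good assms(1) by blast
  also have "\<dots> = norm ((u - closest_point A u) + a)" by (simp add: dist_norm algebra_simps)
  also have "\<dots> \<le> norm (u - closest_point A u) + norm a" by (rule norm_triangle_ineq)
  finally show ?thesis by (simp add: dist_norm)
qed

lemma g_shift:
  assumes "good A" "w \<in> dir A"
  shows "norm ((u + w) - closest_point (dir A) (u + w)) = norm (u - closest_point (dir A) u)"
  using sp_add_in[OF dir_subspace[OF assms(1)] assms(2), of u] by simp

lemma g_scale:
  assumes "good A"
  shows "norm ((t *\<^sub>R u) - closest_point (dir A) (t *\<^sub>R u)) = \<bar>t\<bar> * norm (u - closest_point (dir A) u)"
proof -
  have "(t *\<^sub>R u) - closest_point (dir A) (t *\<^sub>R u) = t *\<^sub>R (u - closest_point (dir A) u)"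
    using sp_scale[OF dir_subspace[OF assms(1)]] by (simp add: scaleR_right_diff_distrib)
  then show ?thesis by simp
qed

lemma nu_bound:
  fixes F :: "'a::euclidean_space set set"
  assumes "finite F" "F \<noteq> {}" "\<forall>A\<in>F. good A"
  shows "\<exists>c>0. \<exists>a. \<forall>x. c * nu F x \<le> (\<Sum>A\<in>F. norm (x - closest_point A x)) + a"
proof -
  define W where "W = Wd F"
  have W: "subspace W" using Wd_subspace assms(3) W_def by blast
  define g where "g A u = norm (u - closest_point (dir A) u)" for A :: "'a set" and u :: 'a
  define h where "h u = (\<Sum>A\<in>F. g A u)" for u :: 'a
  define pt where "pt A = (SOME a. a \<in> A)" for A :: "'a set"
  have pt: "pt A \<in> A" if "A \<in> F" for A
    using assms(3) that unfolding pt_def good_def by (simp add: some_in_eq)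
  define a where "a = (\<Sum>A\<in>F. norm (pt A))"
  have hx: "h x \<le> (\<Sum>A\<in>F. norm (x - closest_point A x)) + a" for x
  proof -
    have "h x \<le> (\<Sum>A\<in>F. norm (x - closest_point A x) + norm (pt A))"
      unfolding h_def g_def using g_bound assms(3) pt by (intro sum_mono) blast
    then show ?thesis by (simp add: sum.distrib a_def)
  qed
  have hshift: "h x = h (x - closest_point W x)" for x
  proof -
    have "g A x = g A (x - closest_point W x)" if "A \<in> F" for A
    proof -
      have "closest_point W x \<in> dir A" using sp_in[OF W] Wd_sub_dir[OF that] W_def by blast
      then show ?thesis using g_shift[of A "closest_point W x" "x - closest_point W x"] assms(3) that
        unfolding g_def by simp
    qed
    then show ?thesis unfolding h_def by simp
  qed
  have hscale: "h (t *\<^sub>R u) = \<bar>t\<bar> * h u" for t u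
    unfolding h_def g_def sum_distrib_left by (rule sum.cong[OF refl]) (use g_scale assms(3) in blast)
  have hnn: "h u \<ge> 0" for u unfolding h_def g_def by (simp add: sum_nonneg)
  define S where "S = sphere (0::'a) 1 \<inter> (\<Inter>w\<in>W. {u. w \<bullet> u = 0})"
  have Sc: "compact S" unfolding S_def
    by (intro compact_Int_closed compact_sphere closed_INT) (auto intro: closed_hyperplane)
  have dg: "\<And>A. A \<in> F \<Longrightarrow> convex (dir A)" "\<And>A. A \<in> F \<Longrightarrow> closed (dir A)"
    "\<And>A. A \<in> F \<Longrightarrow> dir A \<noteq> {}"
    using assms(3) dir_good good_convex good_closed good_def by blast+
  have hc: "continuous_on S h"
    unfolding h_def g_def
    using dg
    by (intro continuous_on_sum continuous_on_norm continuous_on_diff continuous_on_id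
          continuous_on_closest_point) auto
  have perp: "x - closest_point W x \<in> (\<Inter>w\<in>W. {u. w \<bullet> u = 0})" for x
    using sp_orth[OF W] by (auto simp: inner_commute)
  show ?thesis
  proof (cases "S = {}")
    case True
    have "nu F x = 0" for x
    proof (rule ccontr)
      assume "nu F x \<noteq> 0"
      then have n: "norm (x - closest_point W x) \<noteq> 0" unfolding nu_def W_def by simp
      let ?u = "(1 / norm (x - closest_point W x)) *\<^sub>R (x - closest_point W x)"
      have "?u \<in> S" unfolding S_def using n perp[of x] by auto
      then show False using True by blast
    qed
    moreover have "a \<ge> 0" unfolding a_def by (simp add: sum_nonneg)
    ultimately show ?thesis
      by (intro exI[of _ 1]) (auto intro!: add_nonneg_nonneg sum_nonneg)
  next
    case False
    obtain u0 where u0: "u0 \<in> S" "\<And>y. y \<in> S \<Longrightarrow> h u0 \<le> h y"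
      using continuous_attains_inf[OF Sc False hc] by blast
    have cpos: "h u0 > 0"
    proof (rule ccontr)
      assume "\<not> h u0 > 0"
      then have "h u0 = 0" using hnn[of u0] by simp
      then have "\<forall>A\<in>F. g A u0 = 0"
        unfolding h_def using sum_nonneg_eq_0_iff[OF assms(1), of "\<lambda>A. g A u0"] by (simp add: g_def)
      have "\<forall>A\<in>F. u0 \<in> dir A"
      proof
        fix A assume A: "A \<in> F"
        then have "u0 = closest_point (dir A) u0" using \<open>\<forall>A\<in>F. g A u0 = 0\<close> unfolding g_def by simp
        moreover have "closest_point (dir A) u0 \<in> dir A" using sp_in dir_subspace assms(3) A by blast
        ultimately show "u0 \<in> dir A" by simp
      qed
      then have "u0 \<in> W" unfolding W_def Wd_def by blast
      then have "u0 \<bullet> u0 = 0" using u0(1) unfolding S_def by blast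
      then show False using u0(1) unfolding S_def by simp
    qed
    have "h u0 * nu F x \<le> (\<Sum>A\<in>F. norm (x - closest_point A x)) + a" for x
    proof (cases "x - closest_point W x = 0")
      case True
      then have "nu F x = 0" unfolding nu_def W_def by simp
      then show ?thesis using hx[of x] hnn[of x] by simp
    next
      case False
      define u where "u = x - closest_point W x"
      define n where "n = norm u"
      have n0: "n > 0" using False u_def n_def by simp
      have "(1 / n) *\<^sub>R u \<in> S" unfolding S_def using n0 perp[of x] u_def n_def by auto
      then have "h u0 \<le> h ((1 / n) *\<^sub>R u)" using u0(2) by blast
      also have "\<dots> = h u / n" using hscale n0 by simp
      finally have "h u0 * n \<le> h u" using n0 by (simp add: field_simps)
      moreover have "h u = h x" using hshift u_def by simp
      moreover have "nu F x = n" unfolding nu_def n_def u_def W_def by simp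
      ultimately show ?thesis using hx[of x] by simp
    qed
    then show ?thesis using cpos by blast
  qed
qed


lemma nu_sq:
  assumes "\<forall>A\<in>F. good A"
  shows "(nu F x)^2 = (norm x)^2 - (norm (closest_point (Wd F) x))^2"
  using sp_pyth[OF Wd_subspace[OF assms], of x] unfolding nu_def by simp

lemma nu_lip:
  assumes "\<forall>A\<in>F. good A"
  shows "\<bar>nu F x - nu F y\<bar> \<le> norm (x - y)"
proof -
  have "norm ((x - closest_point (Wd F) x) - (y - closest_point (Wd F) y)) \<le> norm (x - y)"
    using sp_resid_le[OF Wd_subspace[OF assms]] .
  moreover have "\<bar>nu F x - nu F y\<bar> \<le> norm ((x - closest_point (Wd F) x) - (y - closest_point (Wd F) y))"
    unfolding nu_def by (rule norm_triangle_ineq3)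
  ultimately show ?thesis by linarith
qed

lemma Wd_stp:
  assumes "\<forall>A\<in>F. good A" "A \<in> F"
  shows "closest_point (Wd F) (stp A m x) = closest_point (Wd F) x"
  using stp_W[of A "Wd F"] assms Wd_subspace Wd_sub_dir by blast

lemma nu_stp:
  assumes "\<forall>A\<in>F. good A" "A \<in> F"
  shows "(nu F (stp A m x))^2 - (norm (stp A m x))^2 = (nu F x)^2 - (norm x)^2"
  using nu_sq[OF assms(1)] Wd_stp[OF assms] by simp

lemma phase:
  fixes x :: "nat \<Rightarrow> 'a::euclidean_space" and As :: "nat \<Rightarrow> 'a set"
  assumes F: "finite F" "\<forall>A\<in>F. good A" and JF: "J \<subseteq> F"
    and lam: "0 \<le> lam" "lam < 2"
    and r: "\<forall>A\<in>F. norm (closest_point A 0) \<le> r"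
    and B: "B \<ge> 1" and RB: "(2 - lam) * R / 2 \<ge> 2 * r + 2 * B + 2 * B^2"
    and PJ: "\<forall>y. (\<forall>i. y (Suc i) = y i \<or> (\<exists>A\<in>J. \<exists>m. 0 \<le> m \<and> m \<le> lam \<and> y (Suc i) = stp A m (y i)))
               \<longrightarrow> (\<forall>A\<in>J. norm (y 0 - closest_point A (y 0)) \<le> \<theta>) \<longrightarrow> (\<forall>k. nu J (y k) \<le> B - 1)"
    and xs: "\<forall>i. As i \<in> F \<and> 0 \<le> ms i \<and> ms i \<le> lam \<and> x (Suc i) = stp (As i) (ms i) (x i)"
    and nearJ: "\<forall>A\<in>J. norm (x 0 - closest_point A (x 0)) \<le> \<theta>"
    and farJ: "\<forall>A\<in>F - J. norm (x 0 - closest_point A (x 0)) \<ge> R + 2 * B"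
  defines "fm \<equiv> (\<lambda>i. if As i \<in> J then 0 else norm (x (Suc i) - x i))"
  defines "Sg \<equiv> (\<lambda>k. \<Sum>i<k. fm i)"
  shows "\<forall>k. Sg k \<le> 1 \<longrightarrow> (nu F (x k))^2 \<le> (nu F (x 0))^2 + B^2"
    and "\<forall>k. Sg k \<le> 1 \<longrightarrow> Sg (Suc k) > 1 \<longrightarrow> (nu F (x (Suc k)))^2 \<le> (nu F (x 0))^2 - B^2"
proof -
  define G where "G = (2 - lam) * R / 2 - 2 * B"
  have G: "G \<ge> 2 * r + 2 * B^2" using RB G_def by simp
  have r0: "r \<ge> 0" if "F \<noteq> {}" using r that norm_ge_zero order_trans by blast
  have J: "\<forall>A\<in>J. good A" using F(2) JF by blast
  have Fne: "F \<noteq> {}" using xs by blast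
  have rr: "r \<ge> 0" using r0[OF Fne] .
  have B2: "B^2 \<ge> 0" by simp
  have Gnn: "G \<ge> 0" using G rr B2 by linarith
  have G2: "G \<ge> 2 * B^2" using G rr by linarith
  have fm0: "fm i \<ge> 0" for i unfolding fm_def by simp
  have Sg_Suc: "Sg (Suc k) = Sg k + fm k" for k unfolding Sg_def by simp
  have Sg_mono: "Sg k \<le> Sg (Suc k)" for k using Sg_Suc fm0 by simp
  have Sg0: "Sg 0 = 0" unfolding Sg_def by simp
  define y where "y = rec_nat (x 0) (\<lambda>i yi. if As i \<in> J then stp (As i) (ms i) yi else yi)"
  have y0: "y 0 = x 0" unfolding y_def by simp
  have ySuc: "y (Suc i) = (if As i \<in> J then stp (As i) (ms i) (y i) else y i)" for i
    unfolding y_def by simp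
  have xSuc: "x (Suc i) = stp (As i) (ms i) (x i)" for i using xs by blast
  have AsF: "As i \<in> F" for i using xs by blast
  have msb: "0 \<le> ms i" "ms i \<le> lam" for i using xs by blast+
  have goodAs: "good (As i)" for i using AsF F(2) by blast
  have xy: "norm (x k - y k) \<le> Sg k" for k
  proof (induction k)
    case 0 then show ?case using y0 Sg0 by simp
  next
    case (Suc k)
    show ?case
    proof (cases "As k \<in> J")
      case True
      have "norm (x (Suc k) - y (Suc k)) = norm (stp (As k) (ms k) (x k) - stp (As k) (ms k) (y k))"
        using True xSuc ySuc by simp
      also have "\<dots> \<le> norm (x k - y k)"
      proof -
        have "ms k \<le> 2" using msb(2)[of k] lam(2) by linarith
        then show ?thesis using stp_nonexp[OF goodAs[of k] msb(1)[of k]] by blast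
      qed
      also have "\<dots> \<le> Sg k" by (rule Suc.IH)
      finally show ?thesis using Sg_mono[of k] by simp
    next
      case False
      have "norm (x (Suc k) - y (Suc k)) = norm ((x (Suc k) - x k) + (x k - y k))"
        using False ySuc by simp
      also have "\<dots> \<le> norm (x (Suc k) - x k) + norm (x k - y k)" by (rule norm_triangle_ineq)
      also have "\<dots> \<le> fm k + Sg k" using False Suc.IH unfolding fm_def by simp
      finally show ?thesis using Sg_Suc by simp
    qed
  qed
  have ytraj: "\<forall>i. y (Suc i) = y i \<or> (\<exists>A\<in>J. \<exists>m. 0 \<le> m \<and> m \<le> lam \<and> y (Suc i) = stp A m (y i))"
  proof
    fix i
    show "y (Suc i) = y i \<or> (\<exists>A\<in>J. \<exists>m. 0 \<le> m \<and> m \<le> lam \<and> y (Suc i) = stp A m (y i))"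
    proof (cases "As i \<in> J")
      case True
      have e: "y (Suc i) = stp (As i) (ms i) (y i)" using True ySuc[of i] by simp
      have "0 \<le> ms i \<and> ms i \<le> lam \<and> y (Suc i) = stp (As i) (ms i) (y i)" using msb[of i] e by simp
      then have "\<exists>m. 0 \<le> m \<and> m \<le> lam \<and> y (Suc i) = stp (As i) m (y i)" by (rule exI)
      then have "\<exists>A\<in>J. \<exists>m. 0 \<le> m \<and> m \<le> lam \<and> y (Suc i) = stp A m (y i)"
        using True by (rule bexI)
      then show ?thesis by (rule disjI2)
    next
      case False
      then show ?thesis using ySuc[of i] by simp
    qed
  qed
  have yB: "nu J (y k) \<le> B - 1" for k
  proof -
    have n: "\<forall>A\<in>J. norm (y 0 - closest_point A (y 0)) \<le> \<theta>" using nearJ y0 by simp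
    have P1: "(\<forall>i. y (Suc i) = y i \<or> (\<exists>A\<in>J. \<exists>m. 0 \<le> m \<and> m \<le> lam \<and> y (Suc i) = stp A m (y i)))
               \<longrightarrow> (\<forall>A\<in>J. norm (y 0 - closest_point A (y 0)) \<le> \<theta>) \<longrightarrow> (\<forall>k. nu J (y k) \<le> B - 1)"
      by (rule spec[OF PJ])
    from P1 ytraj have "(\<forall>A\<in>J. norm (y 0 - closest_point A (y 0)) \<le> \<theta>) \<longrightarrow> (\<forall>k. nu J (y k) \<le> B - 1)"
      by (rule mp)
    from this n have "\<forall>k. nu J (y k) \<le> B - 1" by (rule mp)
    then show ?thesis by (rule spec)
  qed
  have yW: "closest_point (Wd J) (y k) = closest_point (Wd J) (x 0)" for k
  proof (induction k)
    case 0 then show ?case using y0 by simp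
  next
    case (Suc k)
    then show ?case using ySuc Wd_stp[OF J] by simp
  qed
  have yx0: "norm (y k - x 0) \<le> 2 * B - 2" for k
  proof -
    have "y k - x 0 = (y k - closest_point (Wd J) (y k)) - (y 0 - closest_point (Wd J) (y 0))"
      using yW[of k] yW[of 0] y0 by simp
    then have "norm (y k - x 0) = norm ((y k - closest_point (Wd J) (y k)) - (y 0 - closest_point (Wd J) (y 0)))"
      by (rule arg_cong)
    also have "\<dots> \<le> nu J (y k) + nu J (y 0)"
      unfolding nu_def by (rule norm_triangle_ineq4)
    finally have "norm (y k - x 0) \<le> nu J (y k) + nu J (y 0)" .
    then show ?thesis using yB[of k] yB[of 0] by simp
  qed
  have xx0: "norm (x k - x 0) \<le> 2 * B - 1" if "Sg k \<le> 1" for k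
  proof -
    have "norm (x k - x 0) \<le> norm (x k - y k) + norm (y k - x 0)"
      using norm_triangle_ineq[of "x k - y k" "y k - x 0"] by simp
    then show ?thesis using xy[of k] yx0[of k] that by simp
  qed
  have farR: "norm (x k - closest_point A (x k)) \<ge> R" if "Sg k \<le> 1" "A \<in> F - J" for k A
  proof -
    have "norm (x 0 - closest_point A (x 0)) \<le> norm (x 0 - x k) + norm (x k - closest_point A (x k))"
      using dist_cp_lip F(2) that(2) by blast
    moreover have "norm (x 0 - x k) \<le> 2 * B - 1" using xx0[OF that(1)] by (simp add: norm_minus_commute)
    moreover have "R + 2 * B \<le> norm (x 0 - closest_point A (x 0))" using farJ that(2) by blast
    ultimately show ?thesis by linarith
  qed
  have xB: "nu J (x k) \<le> B" if "Sg k \<le> 1" for k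
  proof -
    have "nu J (x k) \<le> nu J (y k) + norm (x k - y k)" using nu_lip[OF J, of "x k" "y k"] by linarith
    then show ?thesis using yB[of k] xy[of k] that by simp
  qed
  define Phi where "Phi k = (nu F (x k))^2 - (nu J (x k))^2" for k
  have farstep: "(nu F (x (Suc k)))^2 \<le> (nu F (x k))^2 - fm k * ((2 - lam) * R / 2)"
    if "Sg k \<le> 1" "As k \<notin> J" for k
  proof -
    have A: "As k \<in> F - J" using that AsF by blast
    have rk: "norm (closest_point (As k) 0) \<le> r" using r AsF by blast
    have RB2: "(2 - lam) * R / 2 \<ge> 2 * r" using RB B by (smt (verit) zero_le_power2)
    have "(norm (x (Suc k)))^2 \<le> (norm (x k))^2 - norm (x (Suc k) - x k) * ((2 - lam) * R / 2)"
      using stp_far[OF goodAs[of k] msb(1)[of k] msb(2)[of k] lam(2) rk farR[OF that(1) A] RB2] xSuc[of k]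
      by simp
    moreover have "(nu F (x (Suc k)))^2 - (norm (x (Suc k)))^2 = (nu F (x k))^2 - (norm (x k))^2"
      using nu_stp[OF F(2) AsF] xSuc by simp
    ultimately show ?thesis using that(2) unfolding fm_def by simp
  qed
  have Phi_dec: "Sg k \<le> 1 \<longrightarrow> Phi k \<le> Phi 0 - Sg k * G" for k
  proof (induction k)
    case 0 then show ?case using Sg0 by simp
  next
    case (Suc k)
    show ?case
    proof
      assume S1: "Sg (Suc k) \<le> 1"
      then have S0: "Sg k \<le> 1" using Sg_mono[of k] by simp
      show "Phi (Suc k) \<le> Phi 0 - Sg (Suc k) * G"
      proof (cases "As k \<in> J")
        case True
        have "(nu J (x (Suc k)))^2 - (norm (x (Suc k)))^2 = (nu J (x k))^2 - (norm (x k))^2"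
          using nu_stp[OF J True] xSuc by simp
        moreover have "(nu F (x (Suc k)))^2 - (norm (x (Suc k)))^2 = (nu F (x k))^2 - (norm (x k))^2"
          using nu_stp[OF F(2) AsF] xSuc by simp
        ultimately have "Phi (Suc k) = Phi k" unfolding Phi_def by simp
        moreover have "fm k = 0" using True unfolding fm_def by simp
        ultimately show ?thesis using Suc.IH S0 Sg_Suc by simp
      next
        case False
        have m: "fm k = norm (x (Suc k) - x k)" using False unfolding fm_def by simp
        have a1: "nu J (x (Suc k)) \<le> B" using xB[OF S1] .
        have a2: "nu J (x k) \<le> B" using xB[OF S0] .
        have a3: "\<bar>nu J (x (Suc k)) - nu J (x k)\<bar> \<le> fm k" using nu_lip[OF J] m by simp
        have n0: "nu J (x (Suc k)) \<ge> 0" "nu J (x k) \<ge> 0" unfolding nu_def by simp_all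
        have "(nu J (x k))^2 - (nu J (x (Suc k)))^2
              = (nu J (x k) + nu J (x (Suc k))) * (nu J (x k) - nu J (x (Suc k)))"
          by (simp add: power2_eq_square algebra_simps)
        also have "\<dots> \<le> (nu J (x k) + nu J (x (Suc k))) * \<bar>nu J (x k) - nu J (x (Suc k))\<bar>"
          using n0 by (intro mult_left_mono) auto
        also have "\<dots> \<le> (2 * B) * fm k"
        proof (rule mult_mono)
          show "nu J (x k) + nu J (x (Suc k)) \<le> 2 * B" using a1 a2 by simp
          show "\<bar>nu J (x k) - nu J (x (Suc k))\<bar> \<le> fm k" using a3 by (simp add: abs_minus_commute)
          show "0 \<le> 2 * B" using B by simp
          show "0 \<le> \<bar>nu J (x k) - nu J (x (Suc k))\<bar>" by simp
        qed
        finally have "(nu J (x k))^2 - (nu J (x (Suc k)))^2 \<le> 2 * B * fm k" .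
        then have "Phi (Suc k) \<le> Phi k - fm k * ((2 - lam) * R / 2) + 2 * B * fm k"
          using farstep[OF S0 False] unfolding Phi_def by simp
        also have "\<dots> = Phi k - fm k * G" unfolding G_def by (simp add: algebra_simps)
        finally show ?thesis using Suc.IH S0 Sg_Suc by (simp add: algebra_simps)
      qed
    qed
  qed
  have Phi0: "Phi 0 \<le> (nu F (x 0))^2" unfolding Phi_def by simp
  have SgG: "Sg k * G \<ge> 0" for k
  proof -
    have "Sg k \<ge> 0" unfolding Sg_def using fm0 by (simp add: sum_nonneg)
    moreover have "G \<ge> 0" by (rule Gnn)
    ultimately show ?thesis by simp
  qed
  have C1: "(nu F (x k))^2 \<le> (nu F (x 0))^2 + B^2 - Sg k * G" if "Sg k \<le> 1" for k
  proof -
    have "(nu F (x k))^2 = Phi k + (nu J (x k))^2" unfolding Phi_def by simp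
    moreover have "(nu J (x k))^2 \<le> B^2"
      using xB[OF that] by (simp add: power_mono nu_def)
    ultimately show ?thesis using Phi_dec[of k] that Phi0 by simp
  qed
  show "\<forall>k. Sg k \<le> 1 \<longrightarrow> (nu F (x k))^2 \<le> (nu F (x 0))^2 + B^2"
  proof (intro allI impI)
    fix k assume "Sg k \<le> 1"
    from C1[OF this] SgG[of k] show "(nu F (x k))^2 \<le> (nu F (x 0))^2 + B^2" by linarith
  qed
  show "\<forall>k. Sg k \<le> 1 \<longrightarrow> Sg (Suc k) > 1 \<longrightarrow> (nu F (x (Suc k)))^2 \<le> (nu F (x 0))^2 - B^2"
  proof (intro allI impI)
    fix k assume S0: "Sg k \<le> 1" and S1: "Sg (Suc k) > 1"
    have notJ: "As k \<notin> J"
    proof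
      assume "As k \<in> J"
      then have "fm k = 0" unfolding fm_def by simp
      then show False using S0 S1 Sg_Suc by simp
    qed
    have Gle: "G \<le> (2 - lam) * R / 2" unfolding G_def using B by simp
    have "(nu F (x (Suc k)))^2 \<le> (nu F (x k))^2 - fm k * ((2 - lam) * R / 2)"
      using farstep[OF S0 notJ] .
    also have "\<dots> \<le> (nu F (x k))^2 - fm k * G"
    proof -
      have "fm k * G \<le> fm k * ((2 - lam) * R / 2)" using Gle fm0[of k] by (rule mult_left_mono)
      then show ?thesis by linarith
    qed
    also have "\<dots> \<le> (nu F (x 0))^2 + B^2 - Sg k * G - fm k * G" using C1[OF S0] by simp
    also have "\<dots> = (nu F (x 0))^2 + B^2 - Sg (Suc k) * G" using Sg_Suc by (simp add: algebra_simps)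
    also have "\<dots> \<le> (nu F (x 0))^2 + B^2 - G"
    proof -
      have "G \<ge> 0" by (rule Gnn)
      then have "Sg (Suc k) * G \<ge> 1 * G" using S1 by (intro mult_right_mono) auto
      then show ?thesis by simp
    qed
    also have "\<dots> \<le> (nu F (x 0))^2 - B^2"
    proof -
      have "G \<ge> 2 * B^2" by (rule G2)
      then show ?thesis by simp
    qed
    finally show "(nu F (x (Suc k)))^2 \<le> (nu F (x 0))^2 - B^2" .
  qed
qed



definition SS :: "'a::euclidean_space set set \<Rightarrow> real \<Rightarrow> bool" where
  "SS F lam \<longleftrightarrow> (\<exists>M. \<forall>x. traj F lam x \<longrightarrow> (\<forall>n. nu F (x n) \<le> nu F (x 0) + M))"

lemma finite_upper:
  assumes "finite S" "\<forall>s\<in>S. \<exists>b::real. \<forall>b'\<ge>b. Q s b'"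
  shows "\<exists>B. \<forall>s\<in>S. \<forall>b'\<ge>B. Q s b'"
  using assms
proof (induction S rule: finite_induct)
  case empty then show ?case by auto
next
  case (insert s S)
  then obtain B where B: "\<forall>t\<in>S. \<forall>b'\<ge>B. Q t b'" by auto
  obtain b where b: "\<forall>b'\<ge>b. Q s b'" using insert.prems by auto
  show ?case by (rule exI[of _ "max B b"]) (use B b in auto)
qed

lemma gap:
  fixes d :: "'b \<Rightarrow> real" and th :: "nat \<Rightarrow> real"
  assumes "finite F" "\<And>i. th i \<le> th (Suc i)"
  shows "\<exists>i \<le> card F. \<forall>A\<in>F. \<not> (th i \<le> d A \<and> d A < th (Suc i))"
proof (rule ccontr)
  assume H: "\<not> ?thesis"
  define f where "f A = (LEAST i. d A < th (Suc i))" for A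
  have "{..card F} \<subseteq> f ` F"
  proof
    fix i assume "i \<in> {..card F}"
    then obtain A where A: "A \<in> F" "th i \<le> d A" "d A < th (Suc i)" using H by auto
    have "f A = i" unfolding f_def
    proof (rule Least_equality)
      show "d A < th (Suc i)" by fact
      fix j assume j: "d A < th (Suc j)"
      show "i \<le> j"
      proof (rule ccontr)
        assume "\<not> i \<le> j" then have "Suc j \<le> i" by simp
        then have "th (Suc j) \<le> th i" using lift_Suc_mono_le[of th, OF assms(2)] by blast
        then show False using j A(2) by simp
      qed
    qed
    then show "i \<in> f ` F" using A(1) by blast
  qed
  then have "card {..card F} \<le> card (f ` F)" by (intro card_mono) (auto simp: assms(1))
  also have "\<dots> \<le> card F" using card_image_le[OF assms(1)] .
  finally show False by simp
qed

lemma traj_shift: "traj F lam x \<Longrightarrow> traj F lam (\<lambda>n. x (n + e))"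
  unfolding traj_def
proof
  fix i
  assume "\<forall>i. \<exists>A\<in>F. \<exists>m\<ge>0. m \<le> lam \<and> x (Suc i) = stp A m (x i)"
  then have "\<exists>A\<in>F. \<exists>m\<ge>0. m \<le> lam \<and> x (Suc (i + e)) = stp A m (x (i + e))" by blast
  then show "\<exists>A\<in>F. \<exists>m\<ge>0. m \<le> lam \<and> x (Suc i + e) = stp A m (x (i + e))" by simp
qed

lemma traj_choice:
  assumes "traj F lam x"
  shows "\<exists>As ms. \<forall>i. As i \<in> F \<and> 0 \<le> ms i \<and> ms i \<le> lam \<and> x (Suc i) = stp (As i) (ms i) (x i)"
proof -
  have "\<forall>i. \<exists>p. fst p \<in> F \<and> 0 \<le> snd p \<and> snd p \<le> lam \<and> x (Suc i) = stp (fst p) (snd p) (x i)"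
    using assms unfolding traj_def by force
  then obtain f where "\<forall>i. fst (f i) \<in> F \<and> 0 \<le> snd (f i) \<and> snd (f i) \<le> lam \<and> x (Suc i) = stp (fst (f i)) (snd (f i)) (x i)"
    by (rule choice[THEN exE]) blast
  then show ?thesis by (intro exI[of _ "\<lambda>i. fst (f i)"] exI[of _ "\<lambda>i. snd (f i)"]) blast
qed

lemma nu_empty: "nu {} x = 0"
  unfolding nu_def Wd_def by (simp add: closest_point_self)

lemma SS_empty: "SS {} lam"
  unfolding SS_def traj_def by auto


lemma PJ_exists:
  fixes F :: "'a::euclidean_space set set"
  assumes F: "finite F" "F \<noteq> {}" "\<forall>A\<in>F. good A" and lam: "0 \<le> lam"
    and IH: "\<And>J. J \<subset> F \<Longrightarrow> SS J lam"
  shows "\<exists>B. B \<ge> 1 \<and> (\<forall>J. J \<subset> F \<longrightarrow>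
     (\<forall>y. (\<forall>i. y (Suc i) = y i \<or> (\<exists>A\<in>J. \<exists>m. 0 \<le> m \<and> m \<le> lam \<and> y (Suc i) = stp A m (y i)))
       \<longrightarrow> (\<forall>A\<in>J. norm (y 0 - closest_point A (y 0)) \<le> \<theta>) \<longrightarrow> (\<forall>k. nu J (y k) \<le> B - 1)))"
proof -
  define Q where "Q J B \<longleftrightarrow> B \<ge> 1 \<and> (\<forall>y. (\<forall>i. y (Suc i) = y i \<or> (\<exists>A\<in>J. \<exists>m. 0 \<le> m \<and> m \<le> lam \<and> y (Suc i) = stp A m (y i)))
       \<longrightarrow> (\<forall>A\<in>J. norm (y 0 - closest_point A (y 0)) \<le> \<theta>) \<longrightarrow> (\<forall>k. nu J (y k) \<le> B - 1))" for J :: "'a set set" and B :: real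
  have each: "\<exists>b::real. \<forall>b'\<ge>b. Q J b'" if JF: "J \<in> {J. J \<subset> F}" for J
  proof (cases "J = {}")
    case True
    show ?thesis by (rule exI[of _ 1]) (auto simp: Q_def True nu_empty)
  next
    case False
    have Jf: "finite J" using JF F(1) finite_subset by auto
    have Jg: "\<forall>A\<in>J. good A" using JF F(3) by auto
    have JF': "J \<subset> F" using JF by simp
    obtain M where M: "\<forall>x. traj J lam x \<longrightarrow> (\<forall>n. nu J (x n) \<le> nu J (x 0) + M)"
      using IH[OF JF'] unfolding SS_def by blast
    obtain c a where c: "c > 0" and ca: "\<forall>x. c * nu J x \<le> (\<Sum>A\<in>J. norm (x - closest_point A x)) + a"
      using nu_bound[OF Jf False Jg] by blast
    obtain A0 where A0: "A0 \<in> J" using False by blast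
    define b where "b = max 1 ((real (card J) * \<theta> + a) / c + M + 1)"
    show ?thesis
    proof (rule exI[of _ b], intro allI impI)
      fix b' assume bb: "b \<le> b'"
      show "Q J b'" unfolding Q_def
      proof (intro conjI allI impI)
        show "1 \<le> b'" using bb unfolding b_def by simp
        fix y k
        assume ty: "\<forall>i. y (Suc i) = y i \<or> (\<exists>A\<in>J. \<exists>m. 0 \<le> m \<and> m \<le> lam \<and> y (Suc i) = stp A m (y i))"
          and y0: "\<forall>A\<in>J. norm (y 0 - closest_point A (y 0)) \<le> \<theta>"
        have "traj J lam y" unfolding traj_def
        proof
          fix i
          show "\<exists>A\<in>J. \<exists>m\<ge>0. m \<le> lam \<and> y (Suc i) = stp A m (y i)"
          proof (cases "y (Suc i) = y i")
            case True
            then have "y (Suc i) = stp A0 0 (y i)" by (simp add: stp_zero)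
            then show ?thesis using A0 lam by blast
          next
            case False
            then show ?thesis using ty[rule_format, of i] by blast
          qed
        qed
        then have 1: "nu J (y k) \<le> nu J (y 0) + M" using M by blast
        have "(\<Sum>A\<in>J. norm (y 0 - closest_point A (y 0))) \<le> real (card J) * \<theta>"
          using sum_bounded_above[of J "\<lambda>A. norm (y 0 - closest_point A (y 0))" \<theta>] y0 by simp
        then have "c * nu J (y 0) \<le> real (card J) * \<theta> + a" using ca[rule_format, of "y 0"] by simp
        then have "nu J (y 0) \<le> (real (card J) * \<theta> + a) / c" using c by (simp add: field_simps)
        then show "nu J (y k) \<le> b' - 1" using 1 bb unfolding b_def by simp
      qed
    qed
  qed
  have "finite {J. J \<subset> F}" by (rule finite_subset[of _ "Pow F"]) (auto simp: F(1))
  from finite_upper[OF this] each obtain B where B: "\<forall>J\<in>{J. J \<subset> F}. \<forall>b'\<ge>B. Q J b'" by blast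
  have "{} \<subset> F" using F(2) by auto
  then have "max B 1 \<ge> 1" by simp
  moreover have "\<forall>J. J \<subset> F \<longrightarrow> Q J (max B 1)" using B by simp
  ultimately show ?thesis unfolding Q_def by blast
qed


lemma core:
  fixes F :: "'a::euclidean_space set set"
  assumes F: "finite F" "F \<noteq> {}" "\<forall>A\<in>F. good A" and lam: "0 \<le> lam" "lam < 2"
    and IH: "\<And>J. J \<subset> F \<Longrightarrow> SS J lam"
  shows "SS F lam"
proof -
  define r where "r = (\<Sum>A\<in>F. norm (closest_point A 0))"
  have r: "\<forall>A\<in>F. norm (closest_point A 0) \<le> r" unfolding r_def using F(1)
    by (auto intro: member_le_sum)
  have r0: "r \<ge> 0" unfolding r_def by (simp add: sum_nonneg)
  define PJ where "PJ J B \<theta> \<longleftrightarrow> (\<forall>y. (\<forall>i. y (Suc i) = y i \<or> (\<exists>A\<in>J. \<exists>m. 0 \<le> m \<and> m \<le> lam \<and> y (Suc i) = stp A m (y i)))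
       \<longrightarrow> (\<forall>A\<in>J. norm (y 0 - closest_point A (y 0)) \<le> \<theta>) \<longrightarrow> (\<forall>k. nu J (y k) \<le> B - 1))" for J :: "'a set set" and B \<theta> :: real
  have "\<forall>\<theta>. \<exists>B. B \<ge> 1 \<and> (\<forall>J. J \<subset> F \<longrightarrow> PJ J B \<theta>)"
    using PJ_exists[OF F lam(1) IH] unfolding PJ_def by blast
  then obtain Bf where Bf: "\<And>\<theta>. Bf \<theta> \<ge> 1" "\<And>\<theta> J. J \<subset> F \<Longrightarrow> PJ J (Bf \<theta>) \<theta>"
    by metis
  define Rf where "Rf \<theta> = (2 * r + 2 * Bf \<theta> + 2 * (Bf \<theta>)^2) * 2 / (2 - lam)" for \<theta> :: real
  have Rf: "(2 - lam) * Rf \<theta> / 2 \<ge> 2 * r + 2 * Bf \<theta> + 2 * (Bf \<theta>)^2" for \<theta>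
    using lam unfolding Rf_def by (simp add: field_simps)
  have Rf0: "Rf \<theta> \<ge> 0" for \<theta>
    using lam r0 Bf(1)[of \<theta>] unfolding Rf_def by (intro divide_nonneg_pos mult_nonneg_nonneg add_nonneg_nonneg) auto
  define phi where "phi \<theta> = \<theta> + Rf \<theta> + 2 * Bf \<theta> + 1" for \<theta> :: real
  define th where "th = rec_nat (0::real) (\<lambda>_ t. phi t)"
  have th0: "th 0 = 0" unfolding th_def by simp
  have thS: "th (Suc i) = phi (th i)" for i unfolding th_def by simp
  have thmono: "th i \<le> th (Suc i)" for i
    using thS Rf0 Bf(1) unfolding phi_def by (smt (verit))
  have thnn: "th i \<ge> 0" for i
  proof (induction i)
    case 0 then show ?case using th0 by simp
  next
    case (Suc i) then show ?case using thmono[of i] by simp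
  qed
  obtain cF aF where cF: "cF > 0" and caF: "\<forall>x. cF * nu F x \<le> (\<Sum>A\<in>F. norm (x - closest_point A x)) + aF"
    using nu_bound[OF F(1) F(2) F(3)] by blast
  define Rstar where "Rstar = (real (card F) * th (card F) + \<bar>aF\<bar>) / cF"
  define tau where "tau = 2 * r^2 / (2 - lam)"
  have tau0: "tau \<ge> 0" unfolding tau_def using lam by simp
  define Gam where "Gam = Rstar^2 + tau"
  define Bsum where "Bsum = (\<Sum>i\<le>card F. (Bf (th i))^2)"
  have Bsum0: "Bsum \<ge> 0" unfolding Bsum_def by (simp add: sum_nonneg)
  have BleBsum: "(Bf (th i))^2 \<le> Bsum" if "i \<le> card F" for i
    unfolding Bsum_def using that by (intro member_le_sum) auto
  have onestep: "(nu F (x (Suc 0)))^2 \<le> (nu F (x 0))^2 + tau" if tx: "traj F lam x" for x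
  proof -
    obtain A m where A: "A \<in> F" "0 \<le> m" "m \<le> lam" "x (Suc 0) = stp A m (x 0)"
      using tx unfolding traj_def by blast
    have "(norm (stp A m (x 0)))^2 \<le> (norm (x 0))^2 + 2 * r^2 / (2 - lam)"
      using stp_incr[of A m lam r "x 0"] A F(3) lam r by blast
    moreover have "(nu F (stp A m (x 0)))^2 - (norm (stp A m (x 0)))^2 = (nu F (x 0))^2 - (norm (x 0))^2"
      using nu_stp[OF F(3) A(1)] .
    ultimately show ?thesis using A(4) unfolding tau_def by simp
  qed
  have main: "\<forall>x. traj F lam x \<longrightarrow> (nu F (x k))^2 \<le> max ((nu F (x 0))^2) Gam + Bsum" for k
  proof (induction k rule: less_induct)
    case (less k)
    show ?case
    proof (intro allI impI)
      fix x assume tx: "traj F lam x"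
      obtain As ms where xs: "\<forall>i. As i \<in> F \<and> 0 \<le> ms i \<and> ms i \<le> lam \<and> x (Suc i) = stp (As i) (ms i) (x i)"
        using traj_choice[OF tx] by blast
      show "(nu F (x k))^2 \<le> max ((nu F (x 0))^2) Gam + Bsum"
      proof (cases "nu F (x 0) \<le> Rstar")
        case True
        show ?thesis
        proof (cases k)
          case 0 then show ?thesis using Bsum0 by simp
        next
          case (Suc k')
          have n0: "nu F (x 0) \<ge> 0" unfolding nu_def by simp
          have "(nu F (x 0))^2 \<le> Rstar^2" using True n0 by (simp add: power_mono)
          then have x1: "(nu F (x (Suc 0)))^2 \<le> Gam" using onestep[OF tx] unfolding Gam_def by simp
          have tr: "traj F lam (\<lambda>n. x (n + 1))" using traj_shift[OF tx] .
          have "k' < k" using Suc by simp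
          from less.IH[OF this, rule_format, OF tr]
          have "(nu F (x (k' + 1)))^2 \<le> max ((nu F (x (0 + 1)))^2) Gam + Bsum" by simp
          then show ?thesis using x1 Suc by simp
        qed
      next
        case False
        define dd where "dd A = norm (x 0 - closest_point A (x 0))" for A :: "'a set"
        obtain i where i: "i \<le> card F" "\<forall>A\<in>F. \<not> (th i \<le> dd A \<and> dd A < th (Suc i))"
          using gap[OF F(1), of th dd] thmono by blast
        define J where "J = {A\<in>F. dd A < th i}"
        have JF: "J \<subset> F"
        proof -
          have "J \<noteq> F"
          proof
            assume JeqF: "J = F"
            have "th i \<le> th (card F)" using lift_Suc_mono_le[of th, OF thmono i(1)] .
            then have "\<forall>A\<in>F. dd A \<le> th (card F)"
            proof (intro ballI)
              fix A assume "th i \<le> th (card F)" "A \<in> F"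
              then have "A \<in> J" using JeqF by simp
              then have "dd A < th i" unfolding J_def by simp
              then show "dd A \<le> th (card F)" using \<open>th i \<le> th (card F)\<close> by linarith
            qed
            then have "(\<Sum>A\<in>F. dd A) \<le> real (card F) * th (card F)"
              using sum_bounded_above[of F dd "th (card F)"] by simp
            then have "cF * nu F (x 0) \<le> real (card F) * th (card F) + \<bar>aF\<bar>"
              using caF[rule_format, of "x 0"] unfolding dd_def by simp
            then have "nu F (x 0) \<le> Rstar" unfolding Rstar_def using cF by (simp add: field_simps)
            then show False using False by simp
          qed
          then show ?thesis unfolding J_def by blast
        qed
        define B where "B = Bf (th i)"
        define R where "R = Rf (th i)"
        have PJJ: "PJ J B (th i)" using Bf(2)[OF JF] unfolding B_def .
        have nearJ: "\<forall>A\<in>J. norm (x 0 - closest_point A (x 0)) \<le> th i"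
          unfolding J_def dd_def by auto
        have farJ: "\<forall>A\<in>F - J. norm (x 0 - closest_point A (x 0)) \<ge> R + 2 * B"
        proof
          fix A assume A: "A \<in> F - J"
          then have "dd A \<ge> th i" unfolding J_def by auto
          then have "dd A \<ge> th (Suc i)" using i(2) A by force
          then show "norm (x 0 - closest_point A (x 0)) \<ge> R + 2 * B"
            unfolding dd_def R_def B_def using thS[of i] thnn[of i] unfolding phi_def by simp
        qed
        have RB: "(2 - lam) * R / 2 \<ge> 2 * r + 2 * B + 2 * B^2" unfolding R_def B_def using Rf .
        note ph = phase[OF F(1) F(3) psubset_imp_subset[OF JF] lam r Bf(1)[of "th i", folded B_def] RB
            PJJ[unfolded PJ_def] xs nearJ farJ]
        define Sg where "Sg k = (\<Sum>i<k. if As i \<in> J then 0 else norm (x (Suc i) - x i))" for k :: nat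
        have ph1: "Sg k \<le> 1 \<Longrightarrow> (nu F (x k))^2 \<le> (nu F (x 0))^2 + B^2" for k
          using ph(1) unfolding Sg_def by blast
        have ph2: "Sg k \<le> 1 \<Longrightarrow> Sg (Suc k) > 1 \<Longrightarrow> (nu F (x (Suc k)))^2 \<le> (nu F (x 0))^2 - B^2" for k
          using ph(2) unfolding Sg_def by blast
        have Sg0: "Sg 0 = 0" unfolding Sg_def by simp
        have B2: "B^2 \<le> Bsum" unfolding B_def using BleBsum[OF i(1)] .
        show ?thesis
        proof (cases "Sg k \<le> 1")
          case True
          then show ?thesis using ph1[OF True] B2 by simp
        next
          case False
          define e where "e = (LEAST e. Sg e > 1)"
          have e1: "Sg e > 1" using LeastI[of "\<lambda>e. Sg e > 1" k] False unfolding e_def by simp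
          have ek: "e \<le> k" using Least_le[of "\<lambda>e. Sg e > 1" k] False unfolding e_def by simp
          have e0: "e \<noteq> 0"
          proof
            assume "e = 0"
            then show False using e1 Sg0 by simp
          qed
          then obtain e' where e': "e = Suc e'" by (cases e) auto
          have "\<not> Sg e' > 1" using not_less_Least[of e' "\<lambda>e. Sg e > 1"] e' unfolding e_def by simp
          then have xe: "(nu F (x e))^2 \<le> (nu F (x 0))^2 - B^2" using ph2[of e'] e1 e' by simp
          have tr: "traj F lam (\<lambda>n. x (n + e))" using traj_shift[OF tx] .
          have "k - e < k" using e0 ek by simp
          from less.IH[OF this, rule_format, OF tr]
          have "(nu F (x (k - e + e)))^2 \<le> max ((nu F (x (0 + e)))^2) Gam + Bsum" by simp
          moreover have "k - e + e = k" using ek by simp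
          ultimately have "(nu F (x k))^2 \<le> max ((nu F (x e))^2) Gam + Bsum" by simp
          moreover have "(nu F (x e))^2 \<le> (nu F (x 0))^2" using xe by (smt (verit) zero_le_power2)
          ultimately show ?thesis by (smt (verit))
        qed
      qed
    qed
  qed
  define M where "M = sqrt (Gam + Bsum)"
  show ?thesis unfolding SS_def
  proof (intro exI[of _ M] allI impI)
    fix x n assume tx: "traj F lam x"
    have "(nu F (x n))^2 \<le> (nu F (x 0))^2 + (Gam + Bsum)"
      using main[of n] tx Gam_def tau0 by (smt (verit) zero_le_power2)
    then have "sqrt ((nu F (x n))^2) \<le> sqrt ((nu F (x 0))^2 + (Gam + Bsum))"
      using real_sqrt_le_mono by blast
    also have "\<dots> \<le> sqrt ((nu F (x 0))^2) + sqrt (Gam + Bsum)"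
      using Gam_def tau0 Bsum0 by (intro sqrt_add_le_add_sqrt) auto
    finally show "nu F (x n) \<le> nu F (x 0) + M" unfolding M_def nu_def by simp
  qed
qed

lemma all_SS:
  fixes F :: "'a::euclidean_space set set"
  assumes "finite F" "\<forall>A\<in>F. good A" "0 \<le> lam" "lam < 2"
  shows "SS F lam"
  using assms
proof (induction F rule: finite_psubset_induct)
  case (psubset F)
  show ?case
  proof (cases "F = {}")
    case True then show ?thesis using SS_empty by simp
  next
    case False
    show ?thesis
    proof (rule core[OF psubset.hyps False psubset.prems(1) psubset.prems(2) psubset.prems(3)])
      fix J assume J: "J \<subset> F"
      then show "SS J lam" using psubset.IH[OF J] psubset.hyps psubset.prems finite_subset by blast
    qed
  qed
qed



lemma poly_affine:
  fixes C :: "'a::euclidean_space set"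
  assumes "polyhedron C" "C \<noteq> {}"
  shows "\<exists>AA. finite AA \<and> (\<forall>A\<in>AA. good A) \<and> (\<forall>x. \<exists>A\<in>AA. closest_point C x = closest_point A x)"
proof -
  obtain H where H: "finite H" "C = \<Inter> H" "\<forall>h\<in>H. \<exists>a b. a \<noteq> 0 \<and> h = {x. a \<bullet> x \<le> b}"
    using assms(1) unfolding polyhedron_def by blast
  have "\<forall>h\<in>H. \<exists>p. h = {x. fst p \<bullet> x \<le> snd p}" using H(3) by fastforce
  then have "\<exists>f. \<forall>h\<in>H. h = {x. fst (f h) \<bullet> x \<le> snd (f h)}" by (rule bchoice)
  then obtain f where f: "\<forall>h\<in>H. h = {x. fst (f h) \<bullet> x \<le> snd (f h)}" ..
  define av where "av h = fst (f h)" for h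
  define bv where "bv h = snd (f h)" for h
  have hv: "h = {x. av h \<bullet> x \<le> bv h}" if "h \<in> H" for h
  proof -
    from f that have "h = {x. fst (f h) \<bullet> x \<le> snd (f h)}" by (rule bspec)
    then show ?thesis unfolding av_def bv_def .
  qed
  define Af where "Af I = {y. \<forall>h\<in>I. av h \<bullet> y = bv h}" for I
  define AA where "AA = Af ` {I. I \<subseteq> H \<and> Af I \<noteq> {}}"
  have fin: "finite AA" unfolding AA_def using H(1) by simp
  have aff: "affine (Af I)" for I
    unfolding affine_def
  proof (intro ballI allI impI)
    fix y z :: 'a and u v :: real
    assume y: "y \<in> Af I" and z: "z \<in> Af I" and uv: "u + v = 1"
    show "u *\<^sub>R y + v *\<^sub>R z \<in> Af I" unfolding Af_def
    proof (intro CollectI ballI)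
      fix h assume h: "h \<in> I"
      have "av h \<bullet> y = bv h" "av h \<bullet> z = bv h" using y z h unfolding Af_def by auto
      then have "av h \<bullet> (u *\<^sub>R y + v *\<^sub>R z) = (u + v) * bv h"
        by (simp add: inner_add_right distrib_right)
      then show "av h \<bullet> (u *\<^sub>R y + v *\<^sub>R z) = bv h" using uv by simp
    qed
  qed
  have gd: "\<forall>A\<in>AA. good A" unfolding AA_def good_def using aff by blast
  have Cc: "closed C" "convex C" using assms(1) polyhedron_imp_closed polyhedron_imp_convex by auto
  have cl: "\<exists>A\<in>AA. closest_point C x = closest_point A x" for x
  proof -
    define p where "p = closest_point C x"
    have pC: "p \<in> C" unfolding p_def using closest_point_in_set[OF Cc(1) assms(2)] .
    define I where "I = {h\<in>H. av h \<bullet> p = bv h}"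
    have pA: "p \<in> Af I" unfolding Af_def I_def by simp
    have IA: "Af I \<in> AA" unfolding AA_def I_def using pA I_def by auto
    have slack: "av h \<bullet> p < bv h" if "h \<in> H - I" for h
    proof -
      have hH: "h \<in> H" using that by blast
      have "p \<in> h" using pC H(2) hH by blast
      then have "p \<in> {x. av h \<bullet> x \<le> bv h}" by (subst (asm) hv[OF hH])
      then have "av h \<bullet> p \<le> bv h" by simp
      then show ?thesis using that unfolding I_def by auto
    qed
    have dot: "(x - p) \<bullet> (z - p) \<le> 0" if z: "z \<in> Af I" for z
    proof -
      have ev1: "\<forall>\<^sub>F t in at_right 0. \<forall>h\<in>H - I. av h \<bullet> (p + t *\<^sub>R (z - p)) < bv h"
      proof (rule eventually_ball_finite)
        show "finite (H - I)" using H(1) by simp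
        show "\<forall>h\<in>H - I. \<forall>\<^sub>F t in at_right 0. av h \<bullet> (p + t *\<^sub>R (z - p)) < bv h"
        proof
          fix h assume h: "h \<in> H - I"
          have "((\<lambda>t. av h \<bullet> (p + t *\<^sub>R (z - p))) \<longlongrightarrow> av h \<bullet> (p + (0::real) *\<^sub>R (z - p))) (at_right 0)"
            by (intro tendsto_intros)
          then have "((\<lambda>t. av h \<bullet> (p + t *\<^sub>R (z - p))) \<longlongrightarrow> av h \<bullet> p) (at_right 0)" by simp
          from order_tendstoD(2)[OF this slack[OF h]]
          show "\<forall>\<^sub>F t in at_right 0. av h \<bullet> (p + t *\<^sub>R (z - p)) < bv h" .
        qed
      qed
      have ev2: "\<forall>\<^sub>F t in at_right (0::real). 0 < t \<and> t < 1"
        unfolding eventually_at_right_field by (intro exI[of _ 1]) auto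
      obtain t where t: "0 < t" "t < 1" "\<forall>h\<in>H - I. av h \<bullet> (p + t *\<^sub>R (z - p)) < bv h"
        using eventually_happens'[OF trivial_limit_at_right_real eventually_conj[OF ev1 ev2]] by blast
      have qC: "p + t *\<^sub>R (z - p) \<in> C"
      proof -
        have "p + t *\<^sub>R (z - p) \<in> h" if h: "h \<in> H" for h
        proof (cases "h \<in> I")
          case True
          have "av h \<bullet> p = bv h" "av h \<bullet> z = bv h" using pA z True unfolding Af_def by auto
          then have "av h \<bullet> (p + t *\<^sub>R (z - p)) = bv h" by (simp add: inner_add_right inner_diff_right)
          then show ?thesis by (subst hv[OF h]) simp
        next
          case False
          then have "av h \<bullet> (p + t *\<^sub>R (z - p)) < bv h" using t(3) h by blast
          then show ?thesis by (subst hv[OF h]) simp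
        qed
        then show ?thesis using H(2) by blast
      qed
      have "(x - p) \<bullet> ((p + t *\<^sub>R (z - p)) - p) \<le> 0"
        using closest_point_dot[OF Cc(2) Cc(1) qC, of x] unfolding p_def .
      then have "t * ((x - p) \<bullet> (z - p)) \<le> 0" by simp
      then show ?thesis using t(1) by (simp add: mult_le_0_iff)
    qed
    have "p = closest_point (Af I) x"
    proof (rule closest_point_unique)
      show "convex (Af I)" using aff affine_imp_convex by blast
      show "closed (Af I)" using aff affine_closed by blast
      show "p \<in> Af I" by (rule pA)
      show "\<forall>z\<in>Af I. dist x p \<le> dist x z"
      proof
        fix z assume z: "z \<in> Af I"
        have e: "(x - p) \<bullet> (p - z) = ((norm (x - z))^2 - (norm (x - p))^2 - (norm (p - z))^2) / 2"
          using dot_norm[of "x - p" "p - z"] by simp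
        then have e2: "2 * ((x - p) \<bullet> (p - z)) = (norm (x - z))^2 - (norm (x - p))^2 - (norm (p - z))^2"
          by (simp add: field_simps)
        moreover have "(x - p) \<bullet> (p - z) \<ge> 0" using dot[OF z]
          by (simp add: inner_diff_right)
        moreover have "(norm (p - z))^2 \<ge> 0" by simp
        ultimately have "(norm (x - p))^2 \<le> (norm (x - z))^2" by linarith
        from power2_le_imp_le[OF this] show "dist x p \<le> dist x z" by (simp add: dist_norm)
      qed
    qed
    then show ?thesis using IA unfolding p_def by blast
  qed
  show ?thesis using fin gd cl by blast
qed



theorem theorem2p6:
  fixes \<C> :: "'a::euclidean_space set set"
    and lam :: real
    and x :: "nat \<Rightarrow> 'a"
  assumes "finite \<C>" and "\<C> \<noteq> {}"
    and "\<forall>C\<in>\<C>. polyhedron C \<and> C \<noteq> {}"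
    and "0 \<le> lam" and "lam < 2"
    and "\<forall>n. \<exists>R\<in>relaxed_projectors \<C> {0..lam}. x (Suc n) = R (x n)"
  shows "bounded (range x)"
proof -
  have "\<forall>C\<in>\<C>. \<exists>AA. finite AA \<and> (\<forall>A\<in>AA. good A) \<and> (\<forall>x. \<exists>A\<in>AA. closest_point C x = closest_point A x)"
    using poly_affine assms(3) by blast
  then have "\<exists>Af. \<forall>C\<in>\<C>. finite (Af C) \<and> (\<forall>A\<in>Af C. good A) \<and> (\<forall>x. \<exists>A\<in>Af C. closest_point C x = closest_point A x)"
    by (rule bchoice)
  then obtain Af where Af: "\<forall>C\<in>\<C>. finite (Af C) \<and> (\<forall>A\<in>Af C. good A) \<and> (\<forall>x. \<exists>A\<in>Af C. closest_point C x = closest_point A x)"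
    ..
  define AA where "AA = \<Union> (Af ` \<C>)"
  have fin: "finite AA" unfolding AA_def using assms(1) Af by blast
  have gd: "\<forall>A\<in>AA. good A" unfolding AA_def using Af by blast
  have tx: "traj AA lam x" unfolding traj_def
  proof
    fix n
    obtain R where R: "R \<in> relaxed_projectors \<C> {0..lam}" "x (Suc n) = R (x n)" using assms(6) by blast
    then obtain C m where Cm: "C \<in> \<C>" "m \<in> {0..lam}"
      "R = (\<lambda>x. (1 - m) *\<^sub>R x + m *\<^sub>R closest_point C x)"
      unfolding relaxed_projectors_def by blast
    obtain A where A: "A \<in> Af C" "closest_point C (x n) = closest_point A (x n)" using Af Cm(1) by blast
    have "x (Suc n) = stp A m (x n)"
      using R(2) Cm(3) A(2) by (simp add: stp_def algebra_simps)
    moreover have "A \<in> AA" unfolding AA_def using A(1) Cm(1) by blast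
    ultimately show "\<exists>A\<in>AA. \<exists>m\<ge>0. m \<le> lam \<and> x (Suc n) = stp A m (x n)" using Cm(2) by auto
  qed
  obtain M where M: "\<forall>x. traj AA lam x \<longrightarrow> (\<forall>n. nu AA (x n) \<le> nu AA (x 0) + M)"
    using all_SS[OF fin gd assms(4) assms(5)] unfolding SS_def by blast
  have W: "closest_point (Wd AA) (x n) = closest_point (Wd AA) (x 0)" for n
  proof (induction n)
    case 0 then show ?case by simp
  next
    case (Suc n)
    obtain A m where "A \<in> AA" "x (Suc n) = stp A m (x n)" using tx unfolding traj_def by blast
    then show ?case using Wd_stp[OF gd] Suc by simp
  qed
  have "norm (x n) \<le> norm (closest_point (Wd AA) (x 0)) + nu AA (x 0) + M" for n
  proof -
    have "norm (x n) \<le> norm (closest_point (Wd AA) (x n)) + nu AA (x n)"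
      unfolding nu_def using norm_triangle_ineq[of "closest_point (Wd AA) (x n)" "x n - closest_point (Wd AA) (x n)"]
      by simp
    moreover have "nu AA (x n) \<le> nu AA (x 0) + M" using M tx by blast
    ultimately show ?thesis using W[of n] by simp
  qed
  then show ?thesis unfolding bounded_iff by blast
qed


end
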